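(* Fix a structure $\phi$ with nested prediction sets $C_{\phi,\lambda}(x)$ indexed by $\lambda\in\Lambda\subseteq\mathbb{R}$ (i.e. $\lambda_1\le\lambda_2$ implies $C_{\phi,\lambda_1}(x)\subseteq C_{\phi,\lambda_2}(x)$), and write $R(\lambda)=\mathbb{P}\{Y\notin C_{\phi,\lambda}(X)\}$. Let $\alpha\in(0,1)$ and $\lambda^\star=\inf\{\lambda:R(\lambda)\le\alpha\}$. Assume: (1) $R(\lambda)$ is continuous and strictly decreasing in a neighbourhood of $\lambda^\star$; (2) a sequence of random thresholds $\widehat{\lambda}_{\mathrm{DCO}}$ (indexed by sample size $m$) satisfies $\widehat{\lambda}_{\mathrm{DCO}}\xrightarrow{p}\lambda^\star$ as $m\to\infty$; (3) $\widehat{\lambda}_{\mathrm{CRC}}=\inf\{\lambda\in\Lambda:\widehat{R}_m(\lambda)+b_m(\lambda,\delta_m)\le\alpha\}$, where $\widehat{R}_m$ are random functions and $b_m(\lambda,\delta_m)\ge 0$ are random margins satisfying $\sup_{\lambda\in\Lambda}|\widehat{R}_m(\lambda)-R(\lambda)|\xrightarrow{p}0$ and $\sup_{\lambda\in\Lambda}b_m(\lambda,\delta_m)\xrightarrow{p}0$ as $m\to\infty$. Then $\widehat{\lambda}_{\mathrm{CRC}}-\widehat{\lambda}_{\mathrm{DCO}}\xrightarrow{p}0$.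
   Context: $(X,Y)$ is a random pair with values in $\mathcal{X}\times\mathcal{Y}$; $\delta_m\in(0,1)$ is a sequence of confidence parameters; $\xrightarrow{p}$ denotes convergence in probability as $m\to\infty$. *)

theory Defs
  imports "HOL-Probability.Probability"
begin

definition risk :: "('x \<times> 'y) measure \<Rightarrow> (real \<Rightarrow> 'x \<Rightarrow> 'y set) \<Rightarrow> real \<Rightarrow> real" where
  "risk P C l = measure P {p \<in> space P. snd p \<notin> C l (fst p)}"

definition conv_prob :: "'w measure \<Rightarrow> (nat \<Rightarrow> 'w \<Rightarrow> real) \<Rightarrow> real \<Rightarrow> bool" where
  "conv_prob M Z c \<longleftrightarrow> (\<forall>m. Z m \<in> borel_measurable M) \<and>
     (\<forall>e>0. (\<lambda>m. measure M {w \<in> space M. e < \<bar>Z m w - c\<bar>}) \<longlonglongrightarrow> 0)"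

text \<open>Convergence in probability to 0 of extended-real random variables (used for suprema).\<close>
definition conv_prob_zero_ereal :: "'w measure \<Rightarrow> (nat \<Rightarrow> 'w \<Rightarrow> ereal) \<Rightarrow> bool" where
  "conv_prob_zero_ereal M Z \<longleftrightarrow> (\<forall>m. Z m \<in> borel_measurable M) \<and>
     (\<forall>e>0. (\<lambda>m. measure M {w \<in> space M. ereal e < \<bar>Z m w\<bar>}) \<longlonglongrightarrow> 0)"

end

theory Submission
  imports Defs
begin

lemma meas_sandwich:
  assumes "prob_space M"
    and "\<And>m. A m \<in> sets M" "\<And>m. B m \<in> sets M" "\<And>m. D m \<in> sets M"
    and "\<And>m. A m \<subseteq> B m \<union> D m"
    and "(\<lambda>m. measure M (B m)) \<longlonglongrightarrow> 0" "(\<lambda>m. measure M (D m)) \<longlonglongrightarrow> 0"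
  shows "(\<lambda>m. measure M (A m)) \<longlonglongrightarrow> 0"
proof -
  interpret prob_space M by fact
  have le: "measure M (A m) \<le> measure M (B m) + measure M (D m)" for m
  proof -
    have "measure M (A m) \<le> measure M (B m \<union> D m)"
      using assms by (intro finite_measure_mono) auto
    also have "\<dots> \<le> measure M (B m) + measure M (D m)"
      using assms by (intro measure_Un_le) auto
    finally show ?thesis .
  qed
  have "(\<lambda>m. measure M (B m) + measure M (D m)) \<longlonglongrightarrow> 0"
    using tendsto_add[OF assms(6,7)] by simp
  then show ?thesis
    using tendsto_sandwich[of "\<lambda>_. 0" "\<lambda>m. measure M (A m)" sequentially
        "\<lambda>m. measure M (B m) + measure M (D m)" 0]
    by (simp add: le)
qed

lemma ereal_le_of_not_abs:
  fixes x :: ereal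
  assumes "\<not> ereal e < \<bar>x\<bar>"
  shows "x \<le> ereal e"
  using assms by (cases x) auto

theorem proposition3p3:
  fixes P :: "('x \<times> 'y) measure"
    and C :: "real \<Rightarrow> 'x \<Rightarrow> 'y set"
    and Lam :: "real set"
    and M :: "'w measure"
    and alpha :: real
    and delta :: "nat \<Rightarrow> real"
    and lamDCO :: "nat \<Rightarrow> 'w \<Rightarrow> real"
    and Rhat :: "nat \<Rightarrow> real \<Rightarrow> 'w \<Rightarrow> real"
    and b :: "nat \<Rightarrow> real \<Rightarrow> real \<Rightarrow> 'w \<Rightarrow> real"
  defines "lamstar \<equiv> Inf {l \<in> Lam. risk P C l \<le> alpha}"
    and "lamCRC \<equiv> (\<lambda>m w. Inf {l \<in> Lam. Rhat m l w + b m l (delta m) w \<le> alpha})"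
  assumes "prob_space P"
    and "\<And>l. l \<in> Lam \<Longrightarrow> {p \<in> space P. snd p \<notin> C l (fst p)} \<in> sets P"
    and nested: "\<And>l1 l2 x. l1 \<in> Lam \<Longrightarrow> l2 \<in> Lam \<Longrightarrow> l1 \<le> l2 \<Longrightarrow> C l1 x \<subseteq> C l2 x"
    and "0 < alpha" "alpha < 1"
    and "\<And>m. 0 < delta m \<and> delta m < 1"
    and "{l \<in> Lam. risk P C l \<le> alpha} \<noteq> {}"
    and "bdd_below {l \<in> Lam. risk P C l \<le> alpha}"
    and A1: "\<exists>d>0. {lamstar - d <..< lamstar + d} \<subseteq> Lam \<and>
               continuous_on {lamstar - d <..< lamstar + d} (risk P C) \<and>
               (\<forall>l1 \<in> {lamstar - d <..< lamstar + d}. \<forall>l2 \<in> {lamstar - d <..< lamstar + d}.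
                  l1 < l2 \<longrightarrow> risk P C l2 < risk P C l1)"
    and "prob_space M"
    and A2: "conv_prob M lamDCO lamstar"
    and bnn: "\<And>m l w. l \<in> Lam \<Longrightarrow> w \<in> space M \<Longrightarrow> 0 \<le> b m l (delta m) w"
    and A3a: "conv_prob_zero_ereal M (\<lambda>m w. SUP l\<in>Lam. ereal \<bar>Rhat m l w - risk P C l\<bar>)"
    and A3b: "conv_prob_zero_ereal M (\<lambda>m w. SUP l\<in>Lam. ereal (b m l (delta m) w))"
    and "\<And>m. lamCRC m \<in> borel_measurable M"
  shows "conv_prob M (\<lambda>m w. lamCRC m w - lamDCO m w) 0"
proof -
  let ?S = "{l \<in> Lam. risk P C l \<le> alpha}"
  let ?R = "risk P C"
  have rmono: "?R l2 \<le> ?R l1" if "l1 \<in> Lam" "l2 \<in> Lam" "l1 \<le> l2" for l1 l2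
  proof -
    interpret prob_space P by fact
    show ?thesis unfolding risk_def
      using that nested[OF that] assms(4)[OF that(1)]
      by (intro finite_measure_mono) auto
  qed
  obtain d where d: "d > 0" "{lamstar - d <..< lamstar + d} \<subseteq> Lam"
    "\<forall>l1 \<in> {lamstar - d <..< lamstar + d}. \<forall>l2 \<in> {lamstar - d <..< lamstar + d}.
                  l1 < l2 \<longrightarrow> ?R l2 < ?R l1"
    using A1 by blast
  have mA: "(\<lambda>w. SUP l\<in>Lam. ereal \<bar>Rhat m l w - ?R l\<bar>) \<in> borel_measurable M" for m
    using A3a unfolding conv_prob_zero_ereal_def by blast
  have mB: "(\<lambda>w. SUP l\<in>Lam. ereal (b m l (delta m) w)) \<in> borel_measurable M" for m
    using A3b unfolding conv_prob_zero_ereal_def by blast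
  have CRC: "conv_prob M lamCRC lamstar"
    unfolding conv_prob_def
  proof (intro conjI allI impI)
    show "lamCRC m \<in> borel_measurable M" for m by fact
    fix e :: real assume "e > 0"
    define e' where "e' = min e d / 2"
    have e': "0 < e'" "e' < d" "e' < e" using \<open>e>0\<close> d(1) unfolding e'_def by auto
    define lp where "lp = lamstar + e'"
    define lm where "lm = lamstar - e'"
    have lpI: "lp \<in> {lamstar - d <..< lamstar + d}" "lm \<in> {lamstar - d <..< lamstar + d}"
      using e' unfolding lp_def lm_def by auto
    have Rp: "?R lp < alpha"
    proof -
      have "Inf ?S < lp" using e' unfolding lp_def lamstar_def by simp
      then obtain s where s: "s \<in> ?S" "s < lp" using cInf_lessD[OF assms(9)] by blast
      have "lamstar \<le> s" unfolding lamstar_def using s(1) assms(10) by (rule cInf_lower)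
      then have "s \<in> {lamstar - d <..< lamstar + d}" using s(2) lpI d(1) by auto
      then have "?R lp < ?R s" using d(3) lpI s(2) by blast
      then show ?thesis using s(1) by simp
    qed
    have Rm: "alpha < ?R l" if "l \<in> Lam" "l \<le> lm" for l
    proof -
      have lmL: "lm \<in> Lam" using lpI d(2) by blast
      have "lm \<notin> ?S"
      proof
        assume "lm \<in> ?S"
        then have "lamstar \<le> lm" unfolding lamstar_def using assms(10) by (rule cInf_lower)
        then show False using e' unfolding lm_def by simp
      qed
      then have "alpha < ?R lm" using lmL by auto
      also have "\<dots> \<le> ?R l" using rmono[OF that(1) lmL that(2)] .
      finally show ?thesis .
    qed
    define eta where "eta = min (alpha - ?R lp) (?R lm - alpha) / 2"
    have eta: "0 < eta" "?R lp + 2 * eta \<le> alpha" "alpha + 2 * eta \<le> ?R lm"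
      using Rp Rm[of lm] lpI d(2) unfolding eta_def by auto
    define SA where "SA m = {w \<in> space M. ereal eta < \<bar>SUP l\<in>Lam. ereal \<bar>Rhat m l w - ?R l\<bar>\<bar>}" for m
    define SB where "SB m = {w \<in> space M. ereal eta < \<bar>SUP l\<in>Lam. ereal (b m l (delta m) w)\<bar>}" for m
    define SE where "SE m = {w \<in> space M. e < \<bar>lamCRC m w - lamstar\<bar>}" for m
    have key: "\<bar>lamCRC m w - lamstar\<bar> \<le> e'" if w: "w \<in> space M" "w \<notin> SA m" "w \<notin> SB m" for m w
    proof -
      have sa: "(SUP l\<in>Lam. ereal \<bar>Rhat m l w - ?R l\<bar>) \<le> ereal eta"
        using w unfolding SA_def by (intro ereal_le_of_not_abs) auto
      have sb: "(SUP l\<in>Lam. ereal (b m l (delta m) w)) \<le> ereal eta"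
        using w unfolding SB_def by (intro ereal_le_of_not_abs) auto
      have ra: "\<bar>Rhat m l w - ?R l\<bar> \<le> eta" if "l \<in> Lam" for l
      proof -
        have "ereal \<bar>Rhat m l w - ?R l\<bar> \<le> (SUP l\<in>Lam. ereal \<bar>Rhat m l w - ?R l\<bar>)"
          using that by (rule SUP_upper)
        then show ?thesis using sa order_trans by fastforce
      qed
      have rb: "b m l (delta m) w \<le> eta" if "l \<in> Lam" for l
      proof -
        have "ereal (b m l (delta m) w) \<le> (SUP l\<in>Lam. ereal (b m l (delta m) w))"
          using that by (rule SUP_upper)
        then show ?thesis using sb order_trans by fastforce
      qed
      let ?T = "{l \<in> Lam. Rhat m l w + b m l (delta m) w \<le> alpha}"
      have lpL: "lp \<in> Lam" using lpI d(2) by blast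
      have lpT: "lp \<in> ?T" using ra[OF lpL] rb[OF lpL] eta lpL by auto
      have lb: "lm < t" if "t \<in> ?T" for t
      proof (rule ccontr)
        assume "\<not> lm < t"
        then have tl: "t \<le> lm" by simp
        have tL: "t \<in> Lam" using that by simp
        have "?R t \<ge> ?R lm" using rmono[OF tL _ tl] lpI d(2) by blast
        then show False using that ra[OF tL] bnn[OF tL w(1), of m] eta by auto
      qed
      have bdd: "bdd_below ?T" using lb by (meson bdd_below.I less_imp_le)
      have "Inf ?T \<le> lp" using lpT bdd by (rule cInf_lower)
      moreover have "lm \<le> Inf ?T" using lpT lb by (intro cInf_greatest) (auto intro: less_imp_le)
      ultimately show ?thesis unfolding lamCRC_def lp_def lm_def by auto
    qed
    have "(\<lambda>m. measure M (SE m)) \<longlonglongrightarrow> 0"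
    proof (rule meas_sandwich[where B=SA and D=SB])
      show "prob_space M" by fact
      show "SE m \<in> sets M" for m unfolding SE_def using assms(17)[of m] by measurable
      show "SA m \<in> sets M" for m unfolding SA_def using mA[of m] by measurable
      show "SB m \<in> sets M" for m unfolding SB_def using mB[of m] by measurable
      show "SE m \<subseteq> SA m \<union> SB m" for m
        using key[of _ m] e' unfolding SE_def SA_def SB_def by force
      show "(\<lambda>m. measure M (SA m)) \<longlonglongrightarrow> 0" using A3a eta(1) unfolding conv_prob_zero_ereal_def SA_def by blast
      show "(\<lambda>m. measure M (SB m)) \<longlonglongrightarrow> 0" using A3b eta(1) unfolding conv_prob_zero_ereal_def SB_def by blast
    qed
    then show "(\<lambda>m. measure M {w \<in> space M. e < \<bar>lamCRC m w - lamstar\<bar>}) \<longlonglongrightarrow> 0"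
      unfolding SE_def .
  qed
  show ?thesis
    unfolding conv_prob_def
  proof (intro conjI allI impI)
    have mD: "lamDCO m \<in> borel_measurable M" for m using A2 unfolding conv_prob_def by blast
    show "(\<lambda>w. lamCRC m w - lamDCO m w) \<in> borel_measurable M" for m
      using assms(17)[of m] mD[of m] by measurable
    fix e :: real assume "e > 0"
    have h: "e/2 > 0" using \<open>e>0\<close> by simp
    show "(\<lambda>m. measure M {w \<in> space M. e < \<bar>lamCRC m w - lamDCO m w - 0\<bar>}) \<longlonglongrightarrow> 0"
    proof (rule meas_sandwich[where B="\<lambda>m. {w \<in> space M. e/2 < \<bar>lamCRC m w - lamstar\<bar>}"
          and D="\<lambda>m. {w \<in> space M. e/2 < \<bar>lamDCO m w - lamstar\<bar>}"])
      show "prob_space M" by fact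
      show "{w \<in> space M. e < \<bar>lamCRC m w - lamDCO m w - 0\<bar>} \<in> sets M" for m
        using assms(17)[of m] mD[of m] by measurable
      show "{w \<in> space M. e/2 < \<bar>lamCRC m w - lamstar\<bar>} \<in> sets M" for m
        using assms(17)[of m] by measurable
      show "{w \<in> space M. e/2 < \<bar>lamDCO m w - lamstar\<bar>} \<in> sets M" for m
        using mD[of m] by measurable
      show "{w \<in> space M. e < \<bar>lamCRC m w - lamDCO m w - 0\<bar>} \<subseteq>
          {w \<in> space M. e/2 < \<bar>lamCRC m w - lamstar\<bar>} \<union> {w \<in> space M. e/2 < \<bar>lamDCO m w - lamstar\<bar>}" for m
        by (auto simp: abs_if split: if_splits)
      show "(\<lambda>m. measure M {w \<in> space M. e/2 < \<bar>lamCRC m w - lamstar\<bar>}) \<longlonglongrightarrow> 0"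
        using CRC h unfolding conv_prob_def by blast
      show "(\<lambda>m. measure M {w \<in> space M. e/2 < \<bar>lamDCO m w - lamstar\<bar>}) \<longlonglongrightarrow> 0"
        using A2 h unfolding conv_prob_def by blast
    qed
  qed
qed

end
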